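(* Let $a_1,\dots,a_n\in\mathbb D$ and suppose $A:=\max_k|a_k|>0$. For $0<\lambda<1/A$ let \[ B_\lambda(z)=\prod_{k=1}^n\frac{z-\lambda a_k}{1-\lambda\overline{a_k}z}. \] Then $\lambda\mapsto M(B_\lambda)$ is strictly increasing and $\lambda\mapsto m(B_\lambda)$ is strictly decreasing on $(0,1/A)$.
   Context: $\mathbb D=\{|z|<1\}$. For a finite Blaschke product $B$, $M(B)=\sup_{|z|=1}|B'(z)|$ and $m(B)=\inf_{|z|=1}|B'(z)|$. *)

theory Defs
  imports "HOL-Analysis.Analysis"
begin

definition blaschke_scaled :: "(nat \<Rightarrow> complex) \<Rightarrow> nat \<Rightarrow> real \<Rightarrow> complex \<Rightarrow> complex" where
  "blaschke_scaled a n lam z =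
     (\<Prod>k<n. (z - of_real lam * a k) / (1 - of_real lam * cnj (a k) * z))"

definition Msup :: "(complex \<Rightarrow> complex) \<Rightarrow> real" where
  "Msup B = (SUP z\<in>sphere 0 1. norm (deriv B z))"

definition minf :: "(complex \<Rightarrow> complex) \<Rightarrow> real" where
  "minf B = (INF z\<in>sphere 0 1. norm (deriv B z))"

end

theory Submission
  imports Defs "HOL-Complex_Analysis.Complex_Analysis"
begin

definition P :: "complex \<Rightarrow> complex \<Rightarrow> real" where
  "P b z = (1 - (norm b)^2) / (norm (z - b))^2"

lemma P_Re: assumes "norm z = 1" shows "Re ((z + b)/(z - b)) = P b z"
proof -
  have "(Re z)^2 + (Im z)^2 = 1" using assms by (metis cmod_power2 power_one)
  then show ?thesis unfolding P_def Re_divide' cmod_power2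
    by (simp add: power2_eq_square algebra_simps)
qed

lemma aux_field:
  fixes N z c w :: complex
  assumes "z \<noteq> 0" "c \<noteq> 0" "w \<noteq> 0"
  shows "N / ((z * c) * D) = (N / (w * c)) / z * (w / D)"
  using assms by (simp add: field_simps)

lemma factor_deriv:
  assumes "norm z = 1" "norm b < 1"
  shows "((\<lambda>z. (z - b) / (1 - cnj b * z)) has_field_derivative
          (of_real (P b z) / z) * ((z - b) / (1 - cnj b * z))) (at z)"
proof -
  have zb: "z - b \<noteq> 0" using assms by auto
  have zc: "z * cnj z = 1" using complex_norm_square[of z] assms by simp
  have d: "1 - cnj b * z = z * cnj (z - b)" using zc by (simp add: algebra_simps)
  have dn: "1 - cnj b * z \<noteq> 0" using d zb assms by auto
  have z0: "z \<noteq> 0" using assms by auto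
  have c0: "cnj (z - b) \<noteq> 0" using zb by simp
  have der: "((\<lambda>z. (z - b) / (1 - cnj b * z)) has_field_derivative
          ((1 - 0) * (1 - cnj b * z) - (z - b) * (0 - cnj b * 1)) / ((1 - cnj b * z) * (1 - cnj b * z))) (at z)"
    by (intro DERIV_divide DERIV_diff DERIV_cmult DERIV_ident DERIV_const dn)
  have num: "(1 - 0) * (1 - cnj b * z) - (z - b) * (0 - cnj b * 1) = 1 - b * cnj b"
    by (simp add: algebra_simps)
  have n1: "of_real ((norm (z-b))^2) = (z - b) * cnj (z - b)" by (rule complex_norm_square)
  have n2: "of_real ((norm b)^2) = b * cnj b" by (rule complex_norm_square)
  have pe: "(of_real (P b z) :: complex) = (1 - b * cnj b) / ((z - b) * cnj (z - b))"
    unfolding P_def of_real_divide of_real_diff n1 n2 by simp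
  have eq: "(1 - b * cnj b) / ((z * cnj (z - b)) * (1 - cnj b * z)) =
     ((1 - b * cnj b) / ((z - b) * cnj (z - b))) / z * ((z - b) / (1 - cnj b * z))"
    by (rule aux_field[OF z0 c0 zb])
  show ?thesis using der unfolding num pe eq[symmetric] d[symmetric] .
qed

lemma prod_deriv:
  fixes m :: nat
  assumes "\<And>k. k < m \<Longrightarrow> ((f k) has_field_derivative (d k * f k z)) (at z)"
  shows "((\<lambda>z. \<Prod>k<m. f k z) has_field_derivative ((\<Sum>k<m. d k) * (\<Prod>k<m. f k z))) (at z)"
  using assms
proof (induction m)
  case 0
  then show ?case by simp
next
  case (Suc m)
  have h1: "((\<lambda>z. \<Prod>k<m. f k z) has_field_derivative ((\<Sum>k<m. d k) * (\<Prod>k<m. f k z))) (at z)"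
    using Suc by auto
  have h2: "((f m) has_field_derivative (d m * f m z)) (at z)" using Suc by auto
  have e: "(\<lambda>z. \<Prod>k<Suc m. f k z) = (\<lambda>z. (\<Prod>k<m. f k z) * f m z)" by (simp add: mult.commute)
  show ?case unfolding e
    by (rule DERIV_cong[OF DERIV_mult[OF h1 h2]]) (simp add: algebra_simps)
qed

lemma factor_norm:
  assumes "norm z = 1" "norm b < 1"
  shows "norm ((z - b) / (1 - cnj b * z)) = 1"
proof -
  have zb: "z - b \<noteq> 0" using assms by auto
  have zc: "z * cnj z = 1" using complex_norm_square[of z] assms by simp
  have d: "1 - cnj b * z = z * cnj (z - b)" using zc by (simp add: algebra_simps)
  show ?thesis unfolding d norm_divide norm_mult complex_mod_cnj using zb assms by simp
qed

lemma P_nonneg: "norm b \<le> 1 \<Longrightarrow> P b z \<ge> 0"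
proof -
  assume "norm b \<le> 1"
  then have "norm b ^ 2 \<le> 1" by (intro power_le_one) simp_all
  then show ?thesis unfolding P_def by (intro divide_nonneg_nonneg) simp_all
qed

definition G :: "(nat \<Rightarrow> complex) \<Rightarrow> nat \<Rightarrow> real \<Rightarrow> complex \<Rightarrow> real" where
  "G a n lam z = (\<Sum>k<n. P (of_real lam * a k) z)"

lemma deriv_norm:
  assumes "norm z = 1" "\<And>k. k < n \<Longrightarrow> norm (of_real lam * a k) < 1"
  shows "norm (deriv (blaschke_scaled a n lam) z) = G a n lam z"
proof -
  define b where "b k = of_real lam * a k" for k
  have B: "blaschke_scaled a n lam = (\<lambda>z. \<Prod>k<n. (z - b k) / (1 - cnj (b k) * z))"
    unfolding blaschke_scaled_def b_def by (auto simp: mult.assoc)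
  have "((\<lambda>z. \<Prod>k<n. (z - b k) / (1 - cnj (b k) * z)) has_field_derivative
      ((\<Sum>k<n. of_real (P (b k) z) / z) * (\<Prod>k<n. (z - b k) / (1 - cnj (b k) * z)))) (at z)"
    by (rule prod_deriv, rule factor_deriv) (use assms b_def in auto)
  then have "deriv (blaschke_scaled a n lam) z =
     (\<Sum>k<n. of_real (P (b k) z) / z) * (\<Prod>k<n. (z - b k) / (1 - cnj (b k) * z))"
    unfolding B by (rule DERIV_imp_deriv)
  moreover have "norm (\<Prod>k<n. (z - b k) / (1 - cnj (b k) * z)) = 1"
    unfolding prod_norm[symmetric]
  proof (rule prod.neutral, rule ballI)
    fix k assume k: "k \<in> {..<n}"
    show "norm ((z - b k) / (1 - cnj (b k) * z)) = 1"
      by (rule factor_norm[OF assms(1)]) (use assms(2) k in \<open>simp add: b_def\<close>)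
  qed
  moreover have "(\<Sum>k<n. of_real (P (b k) z) / z) = of_real (\<Sum>k<n. P (b k) z) / z"
    by (simp add: sum_divide_distrib)
  moreover have "(\<Sum>k<n. P (b k) z) \<ge> 0"
    by (rule sum_nonneg, rule P_nonneg) (use assms b_def in force)
  ultimately show ?thesis using assms unfolding G_def b_def by (simp add: norm_mult norm_divide del: of_real_sum)
qed

definition F :: "(nat \<Rightarrow> complex) \<Rightarrow> nat \<Rightarrow> complex \<Rightarrow> complex \<Rightarrow> complex" where
  "F a n z w = (\<Sum>k<n. (z + w * a k) / (z - w * a k))"

lemma F_Re: "norm z = 1 \<Longrightarrow> Re (F a n z w) = (\<Sum>k<n. P (w * a k) z)"
  unfolding F_def Re_sum using P_Re by simp

lemma P_rot:
  assumes "lam > 0" "norm w = lam" "norm z = 1"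
  shows "P (w * c) z = P (of_real lam * c) (z / (w / of_real lam))"
proof -
  define u where "u = w / of_real lam"
  have u1: "norm u = 1" using assms unfolding u_def by (simp add: norm_divide)
  have u0: "u \<noteq> 0" using u1 by auto
  have wu: "w = of_real lam * u" using assms unfolding u_def by simp
  have e1: "z - w * c = u * (z / u - of_real lam * c)" using u0 wu by (simp add: field_simps)
  have "norm (z - w * c) = norm (z / u - of_real lam * c)"
    unfolding e1 norm_mult u1 by simp
  moreover have "norm (w * c) = norm (of_real lam * c)"
    unfolding wu norm_mult u1 by simp
  ultimately show ?thesis unfolding P_def u_def[symmetric] by simp
qed

lemma F_rot:
  assumes "lam > 0" "norm w = lam" "norm z = 1"
  shows "Re (F a n z w) = G a n lam (z / (w / of_real lam))"
  unfolding F_Re[OF assms(3)] G_def using P_rot[OF assms] by simp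

lemma F_real:
  assumes "norm z = 1"
  shows "Re (F a n z (of_real lam)) = G a n lam z"
  unfolding F_Re[OF assms] G_def by simp

lemma F_holo:
  assumes "norm z = 1" "A > 0" "\<And>k. k < n \<Longrightarrow> norm (a k) \<le> A"
  shows "F a n z holomorphic_on ball 0 (1/A)"
proof -
  have "z - w * a k \<noteq> 0" if "w \<in> ball 0 (1/A)" "k < n" for w k
  proof -
    have "norm (w * a k) \<le> norm w * A"
      unfolding norm_mult using assms(3)[OF that(2)] by (simp add: mult_left_mono)
    also have "\<dots> < (1/A) * A" using that(1) assms(2) by (intro mult_strict_right_mono) auto
    finally have "norm (w * a k) < 1" using assms(2) by simp
    then show ?thesis using assms(1) by auto
  qed
  then show ?thesis unfolding F_def by (auto intro!: holomorphic_intros)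
qed

lemma F_zero: "norm z = 1 \<Longrightarrow> F a n z 0 = of_nat n"
  unfolding F_def by auto

lemma P_real_mult:
  assumes "norm z = 1" "0 \<le> t" "t < 1"
  shows "P (of_real t * z) z = (1 + t) / (1 - t)"
proof -
  have "z - of_real t * z = of_real (1 - t) * z" by (simp add: algebra_simps)
  then have "norm (z - of_real t * z) = \<bar>1 - t\<bar> * norm z" by (simp only: norm_mult norm_of_real)
  then have "norm (z - of_real t * z) = 1 - t" using assms by simp
  moreover have "norm (of_real t * z) = t" using assms by (simp add: norm_mult)
  moreover have "(1 - t^2) / (1 - t)^2 = (1 + t) / (1 - t)"
  proof -
    have "(1 - t^2) / (1 - t)^2 = ((1 + t) * (1 - t)) / ((1 - t) * (1 - t))"
      by (simp add: power2_eq_square algebra_simps)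
    also have "\<dots> = (1 + t) / (1 - t)" using assms by simp
    finally show ?thesis .
  qed
  ultimately show ?thesis unfolding P_def by simp
qed

lemma F_nonconst:
  assumes "norm z = 1" "n \<ge> 1" "Max ((\<lambda>k. norm (a k)) ` {..<n}) > 0"
  shows "\<not> F a n z constant_on ball 0 (1 / Max ((\<lambda>k. norm (a k)) ` {..<n}))"
proof
  define A where "A = Max ((\<lambda>k. norm (a k)) ` {..<n})"
  assume "F a n z constant_on ball 0 (1 / Max ((\<lambda>k. norm (a k)) ` {..<n}))"
  then obtain c where c: "\<And>w. w \<in> ball 0 (1/A) \<Longrightarrow> F a n z w = c"
    unfolding constant_on_def A_def by blast
  have A0: "A > 0" using assms A_def by simp
  have Ak: "norm (a k) \<le> A" if "k < n" for k
    unfolding A_def using that by (intro Max_ge) auto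
  have "0 \<in> {..<n}" using assms(2) by simp
  then have ne: "{..<n} \<noteq> {}" by blast
  have "A \<in> (\<lambda>k. norm (a k)) ` {..<n}" unfolding A_def using ne
    by (intro Max_in) auto
  then obtain k0 where k0: "k0 < n" "norm (a k0) = A" by auto
  have a0: "a k0 \<noteq> 0" using k0 A0 by auto
  define t :: real where "t = real n / (real n + 1)"
  have t0: "0 \<le> t" "t < 1" unfolding t_def by auto
  define w0 where "w0 = of_real t * z / a k0"
  have nw0: "norm w0 = t / A" unfolding w0_def using assms(1) k0 t0
    by (simp add: norm_divide norm_mult)
  have "norm w0 < 1/A" unfolding nw0 using t0 A0 by (simp add: divide_strict_right_mono)
  then have "F a n z w0 = F a n z 0" using c A0 by simp
  then have eqn: "Re (F a n z w0) = real n" using F_zero[OF assms(1)] by simp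
  have "P (w0 * a k0) z \<le> (\<Sum>k<n. P (w0 * a k) z)"
  proof (rule member_le_sum)
    show "k0 \<in> {..<n}" using k0 by simp
    show "finite {..<n}" by simp
    fix k assume k: "k \<in> {..<n} - {k0}"
    have "norm (w0 * a k) \<le> (t / A) * A" unfolding norm_mult nw0
      using Ak k t0 A0 by (intro mult_left_mono) auto
    also have "\<dots> \<le> 1" using t0 A0 by simp
    finally show "0 \<le> P (w0 * a k) z" by (rule P_nonneg)
  qed
  moreover have "w0 * a k0 = of_real t * z" unfolding w0_def using a0 by simp
  moreover have "(1 + t) / (1 - t) = 2 * real n + 1" unfolding t_def
    by (simp add: field_simps)
  ultimately have "2 * real n + 1 \<le> Re (F a n z w0)"
    using P_real_mult[OF assms(1) t0] F_Re[OF assms(1)] by simp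
  then show False using eqn by simp
qed

lemma F_open_image:
  assumes "norm z = 1" "n \<ge> 1" "Max ((\<lambda>k. norm (a k)) ` {..<n}) > 0"
    "r < 1 / Max ((\<lambda>k. norm (a k)) ` {..<n})"
  shows "open (F a n z ` ball 0 r)"
proof -
  define A where "A = Max ((\<lambda>k. norm (a k)) ` {..<n})"
  have Ak: "norm (a k) \<le> A" if "k < n" for k
    unfolding A_def using that by (intro Max_ge) auto
  have sub: "ball 0 r \<subseteq> ball (0::complex) (1/A)" using assms(4) unfolding A_def by auto
  have H: "F a n z holomorphic_on ball 0 (1/A)"
    by (rule F_holo[OF assms(1)]) (use assms(3) Ak A_def in auto)
  have NC: "\<not> F a n z constant_on ball 0 (1/A)"
    using F_nonconst[OF assms(1-3)] unfolding A_def .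
  show ?thesis
    by (rule open_mapping_thm[OF H open_ball connected_ball open_ball sub NC])
qed

lemma key_max:
  assumes "norm z = 1" "n \<ge> 1" "Max ((\<lambda>k. norm (a k)) ` {..<n}) > 0"
    "r < 1 / Max ((\<lambda>k. norm (a k)) ` {..<n})" "w1 \<in> ball 0 r"
    "\<And>w. w \<in> ball 0 r \<Longrightarrow> Re (F a n z w) \<le> Re (F a n z w1)"
  shows False
proof -
  have op: "open (F a n z ` ball 0 r)" by (rule F_open_image[OF assms(1-4)])
  have "F a n z w1 \<in> F a n z ` ball 0 r" using assms(5) by blast
  then obtain e where e: "e > 0" "ball (F a n z w1) e \<subseteq> F a n z ` ball 0 r"
    by (rule openE[OF op])
  have "dist (F a n z w1) (F a n z w1 + of_real (e/2)) = e/2" using e(1) by (simp add: dist_norm)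
  then have "F a n z w1 + of_real (e/2) \<in> ball (F a n z w1) e" using e(1) by simp
  then have "F a n z w1 + of_real (e/2) \<in> F a n z ` ball 0 r" using e(2) by (rule subsetD[rotated])
  then obtain w where w: "w \<in> ball 0 r" "F a n z w = F a n z w1 + of_real (e/2)" by (rule imageE) auto
  have "Re (F a n z w) = Re (F a n z w1) + e/2" using w by simp
  then show False using assms(6)[OF w(1)] e by simp
qed

lemma key_min:
  assumes "norm z = 1" "n \<ge> 1" "Max ((\<lambda>k. norm (a k)) ` {..<n}) > 0"
    "r < 1 / Max ((\<lambda>k. norm (a k)) ` {..<n})" "w1 \<in> ball 0 r"
    "\<And>w. w \<in> ball 0 r \<Longrightarrow> Re (F a n z w) \<ge> Re (F a n z w1)"
  shows False
proof -
  have op: "open (F a n z ` ball 0 r)" by (rule F_open_image[OF assms(1-4)])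
  have "F a n z w1 \<in> F a n z ` ball 0 r" using assms(5) by blast
  then obtain e where e: "e > 0" "ball (F a n z w1) e \<subseteq> F a n z ` ball 0 r"
    by (rule openE[OF op])
  have "dist (F a n z w1) (F a n z w1 - of_real (e/2)) = e/2" using e(1) by (simp add: dist_norm)
  then have "F a n z w1 - of_real (e/2) \<in> ball (F a n z w1) e" using e(1) by simp
  then have "F a n z w1 - of_real (e/2) \<in> F a n z ` ball 0 r" using e(2) by (rule subsetD[rotated])
  then obtain w where w: "w \<in> ball 0 r" "F a n z w = F a n z w1 - of_real (e/2)" by (rule imageE) auto
  have "Re (F a n z w) = Re (F a n z w1) - e/2" using w by simp
  then show False using assms(6)[OF w(1)] e by simp
qed

lemma G_cont:
  assumes "\<And>k. k < n \<Longrightarrow> norm (of_real lam * a k) < 1"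
  shows "continuous_on (sphere 0 1) (G a n lam)"
proof -
  have "norm (z - of_real lam * a k) ^ 2 \<noteq> 0" if "z \<in> sphere 0 1" "k < n" for z k
    using assms[OF that(2)] that(1) by auto
  then show ?thesis unfolding G_def P_def
    by (auto intro!: continuous_intros)
qed

lemma Msup_att:
  assumes "\<And>k. k < n \<Longrightarrow> norm (of_real lam * a k) < 1"
  shows "\<exists>z0\<in>sphere 0 1. (\<forall>z\<in>sphere 0 1. G a n lam z \<le> G a n lam z0) \<and>
     Msup (blaschke_scaled a n lam) = G a n lam z0"
proof -
  obtain z0 where z0: "z0 \<in> sphere 0 1" "\<And>z. z \<in> sphere 0 1 \<Longrightarrow> G a n lam z \<le> G a n lam z0"
    using continuous_attains_sup[OF compact_sphere _ G_cont[OF assms]] by fastforce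
  have "Msup (blaschke_scaled a n lam) = (SUP z\<in>sphere 0 1. G a n lam z)"
    unfolding Msup_def by (rule SUP_cong) (use deriv_norm assms in auto)
  also have "\<dots> = G a n lam z0" by (rule cSup_eq_maximum) (use z0 in auto)
  finally show ?thesis using z0 by blast
qed

lemma minf_att:
  assumes "\<And>k. k < n \<Longrightarrow> norm (of_real lam * a k) < 1"
  shows "\<exists>z0\<in>sphere 0 1. (\<forall>z\<in>sphere 0 1. G a n lam z \<ge> G a n lam z0) \<and>
     minf (blaschke_scaled a n lam) = G a n lam z0"
proof -
  obtain z0 where z0: "z0 \<in> sphere 0 1" "\<And>z. z \<in> sphere 0 1 \<Longrightarrow> G a n lam z \<ge> G a n lam z0"
    using continuous_attains_inf[OF compact_sphere _ G_cont[OF assms]] by fastforce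
  have "minf (blaschke_scaled a n lam) = (INF z\<in>sphere 0 1. G a n lam z)"
    unfolding minf_def by (rule INF_cong) (use deriv_norm assms in auto)
  also have "\<dots> = G a n lam z0" by (rule cInf_eq_minimum) (use z0 in auto)
  finally show ?thesis using z0 by blast
qed

theorem lemma8:
  fixes a :: "nat \<Rightarrow> complex" and n :: nat
  assumes "\<forall>k<n. norm (a k) < 1"
    and "n \<ge> 1"
    and "Max ((\<lambda>k. norm (a k)) ` {..<n}) > 0"
  shows "strict_mono_on {0<..<1 / Max ((\<lambda>k. norm (a k)) ` {..<n})}
           (\<lambda>lam. Msup (blaschke_scaled a n lam)) \<and>
         strict_antimono_on {0<..<1 / Max ((\<lambda>k. norm (a k)) ` {..<n})}
           (\<lambda>lam. minf (blaschke_scaled a n lam))"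
proof -
  define A where "A = Max ((\<lambda>k. norm (a k)) ` {..<n})"
  have A0: "A > 0" using assms(3) A_def by simp
  have Ak: "norm (a k) \<le> A" if "k < n" for k
    unfolding A_def using that by (intro Max_ge) auto
  have small: "norm (of_real lam * a k) < 1" if "lam \<in> {0<..<1/A}" "k < n" for lam k
  proof -
    have "norm (of_real lam * a k) \<le> lam * A"
      unfolding norm_mult using that Ak[OF that(2)] by (simp add: mult_left_mono)
    also have "\<dots> < (1/A) * A" using that A0 by (intro mult_strict_right_mono) auto
    finally show ?thesis using A0 by simp
  qed
  have r: "lam < 1 / Max ((\<lambda>k. norm (a k)) ` {..<n})" if "lam \<in> {0<..<1/A}" for lam
    using that A_def by simp
  have cont: "continuous_on (cball 0 l) (\<lambda>w. Re (F a n z w))"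
    if "norm z = 1" "l \<in> {0<..<1/A}" for z l
  proof -
    have "F a n z holomorphic_on ball 0 (1/A)"
      by (rule F_holo[OF that(1)]) (use A0 Ak in auto)
    then have "continuous_on (ball 0 (1/A)) (F a n z)"
      by (rule holomorphic_on_imp_continuous_on)
    moreover have "cball 0 l \<subseteq> ball (0::complex) (1/A)" using that(2) by auto
    ultimately have "continuous_on (cball 0 l) (F a n z)" by (rule continuous_on_subset)
    then show ?thesis by (rule continuous_on_Re)
  qed
  have up: "\<exists>w2. norm w2 = l2 \<and> Re (F a n z (of_real l1)) < Re (F a n z w2)"
    if z: "norm z = 1" and l: "l1 \<in> {0<..<1/A}" "l2 \<in> {0<..<1/A}" "l1 < l2" for z l1 l2
  proof -
    obtain ws where ws: "ws \<in> cball 0 l2" "\<And>w. w \<in> cball 0 l2 \<Longrightarrow> Re (F a n z w) \<le> Re (F a n z ws)"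
      using continuous_attains_sup[OF compact_cball _ cont[OF z l(2)]] l by fastforce
    have "norm ws = l2"
    proof (rule ccontr)
      assume "norm ws \<noteq> l2"
      then have "ws \<in> ball 0 l2" using ws(1) by auto
      then show False
        by (rule key_max[OF z assms(2,3) r[OF l(2)]]) (use ws(2) in auto)
    qed
    moreover have "Re (F a n z (of_real l1)) < Re (F a n z ws)"
    proof -
      have le: "Re (F a n z (of_real l1)) \<le> Re (F a n z ws)" using ws(2) l by auto
      have "Re (F a n z (of_real l1)) \<noteq> Re (F a n z ws)"
      proof
        assume eq: "Re (F a n z (of_real l1)) = Re (F a n z ws)"
        have "of_real l1 \<in> ball (0::complex) l2" using l by auto
        then show False
          by (rule key_max[OF z assms(2,3) r[OF l(2)]]) (use ws(2) eq in auto)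
      qed
      then show ?thesis using le by simp
    qed
    ultimately show ?thesis by blast
  qed
  have down: "\<exists>w2. norm w2 = l2 \<and> Re (F a n z w2) < Re (F a n z (of_real l1))"
    if z: "norm z = 1" and l: "l1 \<in> {0<..<1/A}" "l2 \<in> {0<..<1/A}" "l1 < l2" for z l1 l2
  proof -
    obtain ws where ws: "ws \<in> cball 0 l2" "\<And>w. w \<in> cball 0 l2 \<Longrightarrow> Re (F a n z w) \<ge> Re (F a n z ws)"
      using continuous_attains_inf[OF compact_cball _ cont[OF z l(2)]] l by fastforce
    have "norm ws = l2"
    proof (rule ccontr)
      assume "norm ws \<noteq> l2"
      then have "ws \<in> ball 0 l2" using ws(1) by auto
      then show False
        by (rule key_min[OF z assms(2,3) r[OF l(2)]]) (use ws(2) in auto)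
    qed
    moreover have "Re (F a n z ws) < Re (F a n z (of_real l1))"
    proof -
      have le: "Re (F a n z (of_real l1)) \<ge> Re (F a n z ws)" using ws(2) l by auto
      have "Re (F a n z (of_real l1)) \<noteq> Re (F a n z ws)"
      proof
        assume eq: "Re (F a n z (of_real l1)) = Re (F a n z ws)"
        have "of_real l1 \<in> ball (0::complex) l2" using l by auto
        then show False
          by (rule key_min[OF z assms(2,3) r[OF l(2)]]) (use ws(2) eq in auto)
      qed
      then show ?thesis using le by simp
    qed
    ultimately show ?thesis by blast
  qed
  have sph: "z / (w / of_real l) \<in> sphere 0 1" if "norm z = 1" "norm w = l" "l > 0" for z w :: complex and l :: real
    using that by (simp add: norm_divide norm_mult)
  have M: "strict_mono_on {0<..<1/A} (\<lambda>lam. Msup (blaschke_scaled a n lam))"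
  proof (rule monotone_onI)
    fix x y assume xy: "x \<in> {0<..<1/A}" "y \<in> {0<..<1/A}" "x < y"
    obtain z1 where z1: "z1 \<in> sphere 0 1" "Msup (blaschke_scaled a n x) = G a n x z1"
      using Msup_att[of n x a] small[OF xy(1)] by blast
    obtain z2 where z2: "\<forall>z\<in>sphere 0 1. G a n y z \<le> G a n y z2"
       "Msup (blaschke_scaled a n y) = G a n y z2"
      using Msup_att[of n y a] small[OF xy(2)] by blast
    have nz1: "norm z1 = 1" using z1 by simp
    obtain w2 where w2: "norm w2 = y" "Re (F a n z1 (of_real x)) < Re (F a n z1 w2)"
      using up[OF nz1 xy] by blast
    have "Msup (blaschke_scaled a n x) = Re (F a n z1 (of_real x))"
      using z1(2) F_real[OF nz1] by simp
    also have "\<dots> < Re (F a n z1 w2)" by (rule w2(2))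
    also have "\<dots> = G a n y (z1 / (w2 / of_real y))"
      by (rule F_rot) (use xy w2 nz1 in auto)
    also have "\<dots> \<le> Msup (blaschke_scaled a n y)"
      using z2 sph[OF nz1 w2(1)] xy by auto
    finally show "Msup (blaschke_scaled a n x) < Msup (blaschke_scaled a n y)" .
  qed
  have m: "strict_antimono_on {0<..<1/A} (\<lambda>lam. minf (blaschke_scaled a n lam))"
  proof (rule monotone_onI)
    fix x y assume xy: "x \<in> {0<..<1/A}" "y \<in> {0<..<1/A}" "x < y"
    obtain z1 where z1: "z1 \<in> sphere 0 1" "minf (blaschke_scaled a n x) = G a n x z1"
      using minf_att[of n x a] small[OF xy(1)] by blast
    obtain z2 where z2: "\<forall>z\<in>sphere 0 1. G a n y z \<ge> G a n y z2"
       "minf (blaschke_scaled a n y) = G a n y z2"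
      using minf_att[of n y a] small[OF xy(2)] by blast
    have nz1: "norm z1 = 1" using z1 by simp
    obtain w2 where w2: "norm w2 = y" "Re (F a n z1 w2) < Re (F a n z1 (of_real x))"
      using down[OF nz1 xy] by blast
    have "minf (blaschke_scaled a n y) \<le> G a n y (z1 / (w2 / of_real y))"
      using z2 sph[OF nz1 w2(1)] xy by auto
    also have "\<dots> = Re (F a n z1 w2)"
      by (rule F_rot[symmetric]) (use xy w2 nz1 in auto)
    also have "\<dots> < Re (F a n z1 (of_real x))" by (rule w2(2))
    also have "\<dots> = minf (blaschke_scaled a n x)"
      using z1(2) F_real[OF nz1] by simp
    finally show "minf (blaschke_scaled a n y) < minf (blaschke_scaled a n x)" .
  qed
  show ?thesis using M m unfolding A_def by simp
qed
end
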